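(* Let $\{0,1\}$ carry the discrete topology and define $f:\mathbb R\times\mathbb R\to\{0,1\}$ by $f(x,y)=1$ if $x-y\in\mathbb Q$ and $f(x,y)=0$ otherwise. Then for every nonempty open $V\subset\mathbb R$ the set-valued mapping $\mathbb R\ni x\mapsto f_x(V)\in 2^{\{0,1\}}$ is lower quasicontinuous, yet there is no point of $\mathbb R\times\mathbb R$ at which $f$ is horizontally quasicontinuous.
   Context: $f_x(y)=f(x,y)$; $2^Z$ is the set of nonempty subsets of $Z$. A set-valued mapping $F:X\to 2^Z$ is lower quasicontinuous (at every point) if for each $x_0\in X$, each neighborhood $U$ of $x_0$ and each open $W\subset Z$ with $F(x_0)\cap W\neq\emptyset$, there is an open $O$ with $\emptyset\neq O\subset U$ and $F(x)\cap W\neq\emptyset$ for all $x\in O$. $f:X\times Y\to Z$ is horizontally quasicontinuous at $(a,b)$ if for each neighborhood $U$ of $a$, $V$ of $b$, $W$ of $f(a,b)$, there are an open $O$ with $\emptyset\neq O\subset U$ and $y\in V$ with $f(O\times\{y\})\subset W$. *)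

theory Defs
  imports "HOL-Analysis.Analysis"
begin

text \<open>Neighbourhoods of x0 are represented by open sets containing x0 (equivalent, since the
  condition is monotone in U).\<close>
definition lower_quasicontinuous :: "'a topology \<Rightarrow> 'b topology \<Rightarrow> ('a \<Rightarrow> 'b set) \<Rightarrow> bool" where
  "lower_quasicontinuous X Z F \<longleftrightarrow>
     (\<forall>x0 \<in> topspace X. \<forall>U W. openin X U \<and> x0 \<in> U \<and> openin Z W \<and> F x0 \<inter> W \<noteq> {} \<longrightarrow>
        (\<exists>G. openin X G \<and> G \<noteq> {} \<and> G \<subseteq> U \<and> (\<forall>x \<in> G. F x \<inter> W \<noteq> {})))"

definition horizontally_quasicontinuous_at ::
  "'a topology \<Rightarrow> 'b topology \<Rightarrow> 'c topology \<Rightarrow> ('a \<times> 'b \<Rightarrow> 'c) \<Rightarrow> 'a \<Rightarrow> 'b \<Rightarrow> bool" where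
  "horizontally_quasicontinuous_at X Y Z f a b \<longleftrightarrow>
     (\<forall>U V W. openin X U \<and> a \<in> U \<and> openin Y V \<and> b \<in> V \<and> openin Z W \<and> f (a, b) \<in> W \<longrightarrow>
        (\<exists>G y. openin X G \<and> G \<noteq> {} \<and> G \<subseteq> U \<and> y \<in> V \<and> f ` (G \<times> {y}) \<subseteq> W))"

end

theory Submission
  imports Defs
begin

lemma dense_rat_irrat:
  fixes S :: "real set"
  assumes "open S" "S \<noteq> {}"
  shows "(\<exists>y\<in>S. y + t \<in> \<rat>) \<and> (\<exists>y\<in>S. y + t \<notin> \<rat>)"
proof -
  obtain s where s: "s \<in> S" using assms by blast
  then obtain e where e: "e > 0" "ball s e \<subseteq> S" using assms(1) open_contains_ball by blast
  obtain q where q: "q \<in> \<rat>" "s + t < q" "q < s + t + e/2"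
    using Rats_dense_in_real[of "s+t" "s+t+e/2"] e by auto
  obtain d where d: "d \<in> \<rat>" "0 < d" "d < e/4"
    using Rats_dense_in_real[of 0 "e/4"] e by auto
  have "q - t \<in> ball s e" using q e by (simp add: dist_real_def)
  moreover have "q - t + t \<in> \<rat>" using q by simp
  ultimately have A: "\<exists>y\<in>S. y + t \<in> \<rat>" using e by blast
  have cnt: "countable ((\<lambda>r. r - t) ` \<rat>)" by (intro countable_image countable_rat)
  have "\<not> ball s e \<subseteq> (\<lambda>r. r - t) ` \<rat>"
    using uncountable_ball[OF e(1)] countable_subset[OF _ cnt] by blast
  then obtain y where "y \<in> ball s e" "y \<notin> (\<lambda>r. r - t) ` \<rat>" by blast
  moreover have "y + t \<notin> \<rat>"
  proof
    assume "y + t \<in> \<rat>"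
    hence "y \<in> (\<lambda>r. r - t) ` \<rat>" by (intro image_eqI[of _ _ "y+t"]) auto
    with calculation show False by blast
  qed
  ultimately show ?thesis using A e by blast
qed

theorem mainTheorem2:
  fixes f :: "real \<times> real \<Rightarrow> nat"
  assumes f_def: "\<And>x y. f (x, y) = (if x - y \<in> \<rat> then 1 else 0)"
  shows "(\<forall>V. open V \<and> V \<noteq> {} \<longrightarrow>
            lower_quasicontinuous euclideanreal (discrete_topology {0, 1})
              (\<lambda>x. (\<lambda>y. f (x, y)) ` V))
       \<and> \<not> (\<exists>a b. horizontally_quasicontinuous_at euclideanreal euclideanreal
                   (discrete_topology {0, 1}) f a b)"
proof
  show "\<forall>V. open V \<and> V \<noteq> {} \<longrightarrow>
            lower_quasicontinuous euclideanreal (discrete_topology {0, 1})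
              (\<lambda>x. (\<lambda>y. f (x, y)) ` V)"
  proof (intro allI impI)
    fix V :: "real set" assume V: "open V \<and> V \<noteq> {}"
    have C: "(\<lambda>y. f (x, y)) ` V = {0,1}" for x
    proof -
      obtain y1 where y1: "y1 \<in> V" "y1 + (-x) \<in> \<rat>" using dense_rat_irrat[of V "-x"] V by blast
      obtain y2 where y2: "y2 \<in> V" "y2 + (-x) \<notin> \<rat>" using dense_rat_irrat[of V "-x"] V by blast
      have "x - y1 \<in> \<rat>" using y1 Rats_minus_iff[of "y1 - x"] by simp
      moreover have "x - y2 \<notin> \<rat>" using y2 Rats_minus_iff[of "y2 - x"] by simp
      ultimately have "f (x,y1) = 1" "f (x,y2) = 0" using f_def by auto
      hence "{0,1} \<subseteq> (\<lambda>y. f (x, y)) ` V" using y1 y2 by (metis empty_subsetI image_eqI insert_subset)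
      moreover have "(\<lambda>y. f (x, y)) ` V \<subseteq> {0,1}" using f_def by auto
      ultimately show ?thesis by blast
    qed
    show "lower_quasicontinuous euclideanreal (discrete_topology {0, 1}) (\<lambda>x. (\<lambda>y. f (x, y)) ` V)"
      unfolding lower_quasicontinuous_def C by auto
  qed
next
  show "\<not> (\<exists>a b. horizontally_quasicontinuous_at euclideanreal euclideanreal
                   (discrete_topology {0, 1}) f a b)"
  proof
    assume "\<exists>a b. horizontally_quasicontinuous_at euclideanreal euclideanreal
                   (discrete_topology {0, 1}) f a b"
    then obtain a b where h: "horizontally_quasicontinuous_at euclideanreal euclideanreal
                   (discrete_topology {0, 1}) f a b" by blast
    have "f (a,b) \<in> {0,1}" using f_def by simp
    hence "openin (discrete_topology {0,1}) {f (a,b)}" by simp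
    hence "\<exists>G y. openin euclideanreal G \<and> G \<noteq> {} \<and> G \<subseteq> UNIV \<and> y \<in> UNIV \<and> f ` (G \<times> {y}) \<subseteq> {f (a,b)}"
      using h[unfolded horizontally_quasicontinuous_at_def, rule_format, of UNIV UNIV "{f (a,b)}"] by simp
    then obtain G y where G: "open G" "G \<noteq> {}" "f ` (G \<times> {y}) \<subseteq> {f (a,b)}" by auto
    obtain x1 where x1: "x1 \<in> G" "x1 + (-y) \<in> \<rat>" using dense_rat_irrat[of G "-y"] G by blast
    obtain x2 where x2: "x2 \<in> G" "x2 + (-y) \<notin> \<rat>" using dense_rat_irrat[of G "-y"] G by blast
    have "f (x1,y) = 1" "f (x2,y) = 0" using x1 x2 f_def by auto
    moreover have "f (x1,y) = f (a,b)" "f (x2,y) = f (a,b)" using G x1 x2 by auto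
    ultimately show False by simp
  qed
qed

end
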